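(* Let $\tau = \frac{1+\sqrt{5}}{2}$. Then the infinite product $\prod_{n=1}^{\infty} \left(1 - \frac{1}{\tau^n}\right)^{\frac{\mu(n) - \varphi(n)}{n}}$ converges and $$e = \prod_{n=1}^{\infty} \left(1 - \frac{1}{\tau^n}\right)^{\frac{\mu(n) - \varphi(n)}{n}}.$$
   Context: $\tau=\frac{1+\sqrt5}{2}$ is the golden ratio. $\varphi(n)$ is Euler's totient function (the number of integers $1\le k\le n$ with $\gcd(k,n)=1$). $\mu(n)$ is the Möbius function: $\mu(1)=1$, $\mu(n)=0$ if $n$ is not squarefree, and $\mu(n)=(-1)^r$ if $n$ is squarefree with $r$ distinct prime factors. $e$ is the base of the natural logarithm. *)

theory Defs
  imports "HOL-Analysis.Analysis" "HOL-Number_Theory.Number_Theory"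
    "HOL-Computational_Algebra.Squarefree"
begin

definition moebius_mu :: "nat \<Rightarrow> int" where
  "moebius_mu n = (if n = 0 then 0
     else if squarefree n then (-1) ^ card (prime_factors n) else 0)"

definition golden_tau :: real where
  "golden_tau = (1 + sqrt 5) / 2"

end

theory Submission
  imports Defs
begin

lemma mu_p_dvd:
  assumes p: "prime (p::nat)" and "p dvd e" and "e > 0"
  shows "moebius_mu (p*e) = 0"
proof -
  have "p^2 dvd p*e" using assms by (auto simp: power2_eq_square)
  hence "\<not> squarefree (p*e)" using p by (intro not_squarefreeI) (auto simp: prime_gt_1_nat)
  thus ?thesis by (simp add: moebius_mu_def)
qed

lemma mu_p_ndvd:
  assumes p: "prime (p::nat)" and "\<not> p dvd e" and "e > 0"
  shows "moebius_mu (p*e) = - moebius_mu e"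
proof -
  have cop: "coprime p e" using assms by (simp add: prime_imp_coprime)
  have sq: "squarefree (p*e) \<longleftrightarrow> squarefree e"
    using squarefree_mult_coprime[OF cop squarefree_prime[OF p]] squarefree_multD(2) by blast
  have pf: "prime_factors (p*e) = insert p (prime_factors e)"
    using assms by (simp add: prime_factors_product prime_prime_factors)
  have "p \<notin> prime_factors e" using assms by auto
  hence "card (prime_factors (p*e)) = Suc (card (prime_factors e))" by (simp add: pf)
  thus ?thesis using sq assms p by (simp add: moebius_mu_def prime_gt_0_nat)
qed

lemma mu_divisor_sum:
  assumes "N > (0::nat)"
  shows "(\<Sum>d | d dvd N. moebius_mu d) = (if N = 1 then 1 else 0)"
proof (cases "N = 1")
  case True thus ?thesis by (simp add: moebius_mu_def)
next
  case False
  then obtain p where p: "prime p" "p dvd N" using assms prime_factor_nat by blast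
  define M where "M = N div p"
  have N: "N = p * M" using p M_def by simp
  have M0: "M > 0" using assms N by (cases M) auto
  have fin: "finite {d. d dvd N}" using assms by simp
  have split: "{d. d dvd N} = {d. d dvd N \<and> \<not> p dvd d} \<union> {d. d dvd N \<and> p dvd d}" by auto
  have "(\<Sum>d | d dvd N. moebius_mu d) = (\<Sum>d | d dvd N \<and> \<not> p dvd d. moebius_mu d) + (\<Sum>d | d dvd N \<and> p dvd d. moebius_mu d)"
    by (subst split, rule sum.union_disjoint) (use fin in auto)
  also have "{d. d dvd N \<and> p dvd d} = (\<lambda>e. p*e) ` {e. e dvd M}"
  proof safe
    fix d assume "d dvd N" "p dvd d"
    then obtain e where "d = p*e" by (auto elim: dvdE)
    thus "d \<in> (\<lambda>e. p*e) ` {e. e dvd M}" using \<open>d dvd N\<close> p N by (auto simp: prime_gt_0_nat)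
  qed (auto simp: N)
  also have "(\<Sum>d \<in> (\<lambda>e. p*e) ` {e. e dvd M}. moebius_mu d) = (\<Sum>e | e dvd M. moebius_mu (p*e))"
    by (subst sum.reindex) (use p in \<open>auto simp: inj_on_def prime_gt_0_nat\<close>)
  also have "\<dots> = (\<Sum>e | e dvd M \<and> \<not> p dvd e. - moebius_mu e)"
  proof -
    have fM: "finite {e. e dvd M}" using M0 by simp
    have "(\<Sum>e | e dvd M. moebius_mu (p*e)) = (\<Sum>e | e dvd M. if p dvd e then 0 else - moebius_mu e)"
      by (rule sum.cong) (use p M0 in \<open>auto simp: mu_p_dvd mu_p_ndvd dest: dvd_imp_le intro: Nat.gr0I\<close>)
    also have "\<dots> = (\<Sum>e \<in> {e. e dvd M} \<inter> {e. \<not> p dvd e}. - moebius_mu e)"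
      by (subst sum.inter_restrict[OF fM]) (auto intro: sum.cong)
    finally show ?thesis by (simp add: Collect_conj_eq)
  qed
  also have "{e. e dvd M \<and> \<not> p dvd e} = {d. d dvd N \<and> \<not> p dvd d}"
  proof safe
    fix d assume "d dvd N" "\<not> p dvd d"
    hence "coprime d p" using p by (metis coprime_commute prime_imp_coprime)
    thus "d dvd M" using \<open>d dvd N\<close> N by (metis coprime_dvd_mult_right_iff)
  qed (auto simp: N)
  finally show ?thesis using False by (simp add: sum_negf)
qed

lemma shift_has_sum:
  "((\<lambda>k. g (Suc k)) has_sum s) UNIV \<longleftrightarrow> (g has_sum (s::real)) {0<..}"
  by (rule has_sum_reindex_bij_witness[where i="\<lambda>n. n - 1" and j=Suc]) auto

lemma ln_has_sum:
  fixes y :: real assumes "0 \<le> y" "y < 1"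
  shows "((\<lambda>m::nat. y^m / real m) has_sum - ln (1 - y)) {0<..}"
proof -
  have sg: "summable (\<lambda>n. y^Suc n)" using assms by (simp add: summable_geometric)
  have s: "summable (\<lambda>n. y^Suc n / real (Suc n))"
    by (rule summable_comparison_test'[OF sg, of 0]) (use assms in \<open>auto simp: field_simps\<close>)
  have pt: "(-1)^n * (1 / real (n + 1)) * (1 - y - 1)^(Suc n) = - (y^Suc n / real (Suc n))" for n
  proof -
    have e1: "(1 - y - 1) = (-1) * y" by simp
    have e2: "((-1::real)^n) * (-1)^Suc n = -1"
      by (induct n) auto
    have "(-1)^n * (1 / real (n + 1)) * (1 - y - 1)^(Suc n)
       = ((-1)^n * (-1)^Suc n) * (y^Suc n / real (Suc n))"
      unfolding e1 power_mult_distrib by (simp add: field_simps)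
    thus ?thesis unfolding e2 by simp
  qed
  have "ln (1 - y) = (\<Sum>n. - (y^Suc n / real (Suc n)))"
    using ln_series[of "1 - y"] assms by (simp only: pt)
  also have "\<dots> = - (\<Sum>n. y^Suc n / real (Suc n))" by (rule suminf_minus[OF s])
  finally have "(\<lambda>n. y^Suc n / real (Suc n)) sums - ln (1 - y)"
    using summable_sums[OF s] by simp
  hence "((\<lambda>n. y^Suc n / real (Suc n)) has_sum - ln (1 - y)) UNIV"
    by (rule sums_nonneg_imp_has_sum) (use assms in auto)
  thus ?thesis by (subst shift_has_sum[symmetric]) simp
qed

lemma geom_has_sum:
  fixes x :: real assumes "0 \<le> x" "x < 1"
  shows "((\<lambda>N::nat. x^N) has_sum x / (1 - x)) {0<..}"
proof -
  have "(\<lambda>n. x * x^n) sums (x * (1 / (1 - x)))"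
    by (rule sums_mult, rule geometric_sums) (use assms in auto)
  hence "((\<lambda>n. x^Suc n) has_sum x / (1 - x)) UNIV"
    by (intro sums_nonneg_imp_has_sum) (use assms in auto)
  thus ?thesis by (subst shift_has_sum[symmetric]) simp
qed


theorem mainTheorem1:
  defines "f \<equiv> (\<lambda>k::nat. let n = Suc k in
     (1 - 1 / golden_tau ^ n) powr ((real_of_int (moebius_mu n) - real (totient n)) / real n))"
  shows "convergent_prod f \<and> f has_prod exp 1"
proof -
  define t where "t = golden_tau"
  have s5: "sqrt 5 > 1" by (simp add: real_less_rsqrt)
  have t1: "t > 1" using s5 by (simp add: t_def golden_tau_def)
  have tsq: "t^2 = t + 1"
    by (simp add: t_def golden_tau_def power2_eq_square field_simps)
  define x where "x = 1 / t"
  have x0: "0 < x" "x < 1" using t1 by (auto simp: x_def)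
  define c where "c n = real (totient n) - real_of_int (moebius_mu n)" for n
  have mu1: "moebius_mu n \<le> 1" for n
    by (auto simp: moebius_mu_def power_le_one_iff) (metis neg_one_even_power neg_one_odd_power order.refl zero_le_one le_minus_one_simps(1) order_trans)
  have c0: "c n \<ge> 0" if "n > 0" for n
  proof -
    have "totient n \<ge> 1" using that by (simp add: Suc_le_eq)
    thus ?thesis using mu1[of n] by (simp add: c_def)
  qed
  define P where "P = ({0<..} :: nat set)"
  define F where "F = (\<lambda>(n,m). c n * x^(n*m) / real (n*m))"
  define G where "G = (\<lambda>(N,d). c d * x^N / real N)"
  define D where "D = (\<lambda>N::nat. {d. d dvd N})"
  define h where "h = (\<lambda>N::nat. x^N - (if N = 1 then x else 0))"
  have inner2: "((\<lambda>d. G (N,d)) has_sum h N) (D N)" if "N \<in> P" for N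
  proof -
    have fin: "finite (D N)" using that by (simp add: D_def P_def)
    have "(\<Sum>d\<in>D N. c d) = real N - (if N = 1 then 1 else 0)"
    proof -
      have "(\<Sum>d\<in>D N. c d) = (\<Sum>d\<in>D N. real (totient d)) - (\<Sum>d\<in>D N. real_of_int (moebius_mu d))"
        by (simp add: c_def sum_subtractf)
      also have "(\<Sum>d\<in>D N. real (totient d)) = real N"
        unfolding D_def of_nat_sum[symmetric] totient_divisor_sum ..
      also have "(\<Sum>d\<in>D N. real_of_int (moebius_mu d)) = (if N = 1 then 1 else 0)"
        unfolding D_def of_int_sum[symmetric] using mu_divisor_sum[of N] that by (simp add: P_def)
      finally show ?thesis .
    qed
    moreover have "(\<Sum>d\<in>D N. G (N,d)) = (\<Sum>d\<in>D N. c d) * (x^N / real N)"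
      by (simp add: G_def sum_distrib_right sum_divide_distrib)
    ultimately have "(\<Sum>d\<in>D N. G (N,d)) = h N" using that
      by (cases "N = 1") (auto simp: h_def P_def field_simps)
    thus ?thesis using has_sum_finite[OF fin, of "\<lambda>d. G (N,d)"] by simp
  qed
  have outer2: "(h has_sum 1) P"
  proof -
    have g: "((\<lambda>N::nat. x^N) has_sum x / (1 - x)) P" unfolding P_def by (rule geom_has_sum) (use x0 in auto)
    have one: "((\<lambda>N::nat. if N = 1 then x else 0) has_sum x) P"
      by (rule has_sum_finite_neutralI[of "{1}"]) (auto simp: P_def)
    have "((\<lambda>N. x^N + (-1) * (if N = 1 then x else 0)) has_sum (x / (1 - x) + (-1) * x)) P"
      by (intro has_sum_add g has_sum_cmult_right one)
    moreover have "x / (1 - x) + (-1) * x = 1"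
      using t1 tsq by (simp add: x_def field_simps power2_eq_square)
    ultimately show ?thesis by (simp add: h_def)
  qed
  have nonnegG: "G (N,d) \<ge> 0" if "N \<in> P" "d \<in> D N" for N d
  proof -
    have "d > 0" using that by (auto simp: P_def D_def intro: Nat.gr0I)
    thus ?thesis using c0[of d] x0 by (simp add: G_def)
  qed
  have summG: "G summable_on Sigma P D"
    by (rule summable_on_SigmaI[OF inner2 has_sum_imp_summable[OF outer2]]) (use nonnegG in auto)
  have hG: "(G has_sum 1) (Sigma P D)"
    by (rule has_sum_SigmaI[OF inner2 outer2 summG])
  have hF: "(F has_sum 1) (Sigma P (\<lambda>_. P))"
  proof (subst has_sum_reindex_bij_witness[where i="\<lambda>(N,d). (d, N div d)" and j="\<lambda>(n,m). (n*m, n)"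
        and T="Sigma P D" and h=G and s'=1])
    show "(G has_sum 1) (Sigma P D)" by (rule hG)
  qed (auto simp: P_def D_def F_def G_def intro: Nat.gr0I)
  have inner1: "((\<lambda>m. F (n,m)) has_sum (c n / real n * (- ln (1 - x^n)))) P" if "n \<in> P" for n
  proof -
    have "((\<lambda>m::nat. (x^n)^m / real m) has_sum - ln (1 - x^n)) P"
      unfolding P_def by (rule ln_has_sum) (use x0 that in \<open>auto simp: P_def power_less_one_iff\<close>)
    hence "((\<lambda>m. c n / real n * ((x^n)^m / real m)) has_sum (c n / real n * (- ln (1 - x^n)))) P"
      by (rule has_sum_cmult_right)
    thus ?thesis by (simp add: F_def power_mult)
  qed
  define a where "a n = c n / real n * (- ln (1 - x^n))" for n
  have "(a has_sum 1) P"
    unfolding a_def by (rule has_sum_SigmaD[OF hF inner1])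
  hence "((\<lambda>k. a (Suc k)) has_sum 1) UNIV" unfolding P_def by (simp add: shift_has_sum)
  hence sm: "(\<lambda>k. a (Suc k)) sums 1" by (rule has_sum_imp_sums)
  have feq: "f = (\<lambda>k. exp (a (Suc k)))"
  proof
    fix k
    have xp: "x ^ Suc k < 1" using x0 by (metis power_strict_decreasing_iff power_0 zero_less_Suc)
    have eq: "1 / golden_tau ^ Suc k = x ^ Suc k" by (simp add: x_def t_def power_one_over)
    have "f k = (1 - x ^ Suc k) powr ((real_of_int (moebius_mu (Suc k)) - real (totient (Suc k))) / real (Suc k))"
      unfolding f_def Let_def eq ..
    also have "\<dots> = exp (((real_of_int (moebius_mu (Suc k)) - real (totient (Suc k))) / real (Suc k)) * ln (1 - x ^ Suc k))"
      using xp by (simp add: powr_def)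
    also have "\<dots> = exp (a (Suc k))"
      unfolding a_def c_def by (simp add: field_simps)
    finally show "f k = exp (a (Suc k))" .
  qed
  have "raw_has_prod (\<lambda>k. exp (a (Suc k))) 0 (exp 1)"
    by (rule sums_imp_has_prod_exp[OF sm])
  thus ?thesis unfolding feq has_prod_def convergent_prod_def by blast
qed

end
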